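(* Let $\mathrm{GNN}$ be a node-most-expressive GNN and let $f$ be any function of two node representations. Then the graph-autoencoder link representation $\Gamma(\{i,j\},{\mathcal A}) := f(\mathrm{GNN}(i,{\mathcal A}),\mathrm{GNN}(j,{\mathcal A}))$ is not a most expressive structural link representation: there exist a graph ${\mathcal A}$ and nodes $i,j,k$ such that $(\{i,j\},{\mathcal A})\not\simeq(\{i,k\},{\mathcal A})$ but $f(\mathrm{GNN}(i,{\mathcal A}),\mathrm{GNN}(j,{\mathcal A}))=f(\mathrm{GNN}(i,{\mathcal A}),\mathrm{GNN}(k,{\mathcal A}))$.
   Context: Graphs on $\{1,\dots,n\}$ are encoded by tensors ${\mathcal A}\in\mathbb R^{n\times n\times k}$ whose diagonal holds node features, off-diagonal entries edge features, and first slice the adjacency matrix. A permutation $\pi$ acts by $\pi(S)=\{\pi(i):i\in S\}$ and $\pi({\mathcal A})_{\pi(i),\pi(j),:}={\mathcal A}_{i,j,:}$; $(S,{\mathcal A})\simeq(S',{\mathcal A}')$ iff some $\pi$ has $S=\pi(S')$ and ${\mathcal A}=\pi({\mathcal A}')$. A GNN $(i,{\mathcal A})\mapsto\mathrm{GNN}(i,{\mathcal A})$ is node-most-expressive if $\mathrm{GNN}(i,{\mathcal A})=\mathrm{GNN}(j,{\mathcal A}')\iff(\{i\},{\mathcal A})\simeq(\{j\},{\mathcal A}')$. A permutation-invariant function $\Gamma$ is a most expressive structural representation if $\Gamma(S,{\mathcal A})=\Gamma(S',{\mathcal A}')\iff(S,{\mathcal A})\simeq(S',{\mathcal A}')$ for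 all $S,{\mathcal A},S',{\mathcal A}'$; for $|S|=2$ it is called a structural link representation. *)

theory Defs
  imports Complex_Main "HOL-Combinatorics.Permutations"
begin

text \<open>A graph on the nodes {0,...,n-1} (0-based instead of 1-based) with feature
dimension d is a tensor A : nat => nat => nat => real, where only the entries
A i j c with i, j < n and c < d are meaningful.  Slice c = 0 is the adjacency
matrix: off-diagonal entries are 0/1 and symmetric.\<close>

type_synonym tensor = "nat \<Rightarrow> nat \<Rightarrow> nat \<Rightarrow> real"

definition valid_graph :: "nat \<Rightarrow> nat \<Rightarrow> tensor \<Rightarrow> bool" where
  "valid_graph n d A \<longleftrightarrow>
     (\<forall>i<n. \<forall>j<n. i \<noteq> j \<longrightarrow> (A i j 0 = 0 \<or> A i j 0 = 1) \<and> A i j 0 = A j i 0)"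

definition joint_iso :: "nat \<Rightarrow> nat \<Rightarrow> nat set \<Rightarrow> tensor \<Rightarrow> nat set \<Rightarrow> tensor \<Rightarrow> bool" where
  "joint_iso n d S A S' A' \<longleftrightarrow>
     (\<exists>\<pi>. \<pi> permutes {..<n} \<and> S = \<pi> ` S' \<and>
          (\<forall>i<n. \<forall>j<n. \<forall>c<d. A (\<pi> i) (\<pi> j) c = A' i j c))"

definition node_most_expressive :: "nat \<Rightarrow> (nat \<Rightarrow> nat \<Rightarrow> tensor \<Rightarrow> 'r) \<Rightarrow> bool" where
  "node_most_expressive d GNN \<longleftrightarrow>
     (\<forall>n A A' i j. valid_graph n d A \<and> valid_graph n d A' \<and> i < n \<and> j < n \<longrightarrow>
        (GNN n i A = GNN n j A' \<longleftrightarrow> joint_iso n d {i} A {j} A'))"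

end

theory Submission
  imports Defs
begin

definition Ex4 :: tensor where
  "Ex4 a b c = (if c = 0 \<and> (a, b) \<in> {(0,1),(1,0),(2,3),(3,2)} then 1 else 0)"

definition pi4 :: "nat \<Rightarrow> nat" where
  "pi4 = Transposition.transpose 0 3 \<circ> Transposition.transpose 1 2"

lemma pi4_perm: "pi4 permutes {..<4}"
  unfolding pi4_def
  by (intro permutes_compose permutes_swap_id) auto

lemma lt4: "(x::nat) < 4 \<Longrightarrow> x = 0 \<or> x = 1 \<or> x = 2 \<or> x = 3" by auto

theorem proposition1:
  fixes d :: nat
    and GNN :: "nat \<Rightarrow> nat \<Rightarrow> tensor \<Rightarrow> 'r"
    and f :: "'r \<Rightarrow> 'r \<Rightarrow> 'b"
  assumes "d \<ge> 1"
    and "node_most_expressive d GNN"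
  shows "\<exists>n A i j k. valid_graph n d A \<and> i < n \<and> j < n \<and> k < n \<and> i \<noteq> j \<and> i \<noteq> k \<and>
           \<not> joint_iso n d {i, j} A {i, k} A \<and>
           f (GNN n i A) (GNN n j A) = f (GNN n i A) (GNN n k A)"
proof -
  have v: "valid_graph 4 d Ex4"
    unfolding valid_graph_def Ex4_def by auto
  have ni: "\<not> joint_iso 4 d {0, 1} Ex4 {0, 2} Ex4"
  proof
    assume "joint_iso 4 d {0, 1} Ex4 {0, 2} Ex4"
    then obtain \<pi> where p: "\<pi> permutes {..<4}" and S: "{0,1} = \<pi> ` {0,2}"
      and E: "\<forall>i<4. \<forall>j<4. \<forall>c<d. Ex4 (\<pi> i) (\<pi> j) c = Ex4 i j c"
      unfolding joint_iso_def by blast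
    have "\<pi> 0 \<noteq> \<pi> 2" using permutes_inj[OF p] by (metis inj_eq zero_neq_numeral)
    hence "(\<pi> 0 = 0 \<and> \<pi> 2 = 1) \<or> (\<pi> 0 = 1 \<and> \<pi> 2 = 0)" using S by (auto simp: doubleton_eq_iff)
    moreover have "Ex4 (\<pi> 0) (\<pi> 2) 0 = Ex4 0 2 0" using E assms(1) by auto
    ultimately show False unfolding Ex4_def by auto
  qed
  have ji: "joint_iso 4 d {1} Ex4 {2} Ex4"
    unfolding joint_iso_def
  proof (intro exI conjI allI impI)
    show "pi4 permutes {..<4}" by (rule pi4_perm)
    show "{1} = pi4 ` {2}" by (simp add: pi4_def transpose_def)
    fix i j c assume "i < (4::nat)" "j < (4::nat)" "c < d"
    then show "Ex4 (pi4 i) (pi4 j) c = Ex4 i j c"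
      by (elim lt4[elim_format] disjE) (auto simp: pi4_def transpose_def Ex4_def)
  qed
  have "GNN 4 1 Ex4 = GNN 4 2 Ex4"
    using assms(2) v ji unfolding node_most_expressive_def by auto
  thus ?thesis using v ni
    by (intro exI[of _ 4] exI[of _ Ex4] exI[of _ 0] exI[of _ 1] exI[of _ 2]) auto
qed

end
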